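(* For every history formula $\varphi$ of CTL*KΔ$_m$ of knowledge depth $k$, every multiagent model $M$, every history $h$ of $M$ and every record tuple $\vec r$ that stops at $h$: $$h,\vec r\models\varphi\quad\text{iff}\quad \mathit{KT}^k(h,\vec r),\ \vec o(h,\vec r)\models_I\varphi.$$
   Context: Fix a countably infinite set $\mathit{AP}$ of atomic propositions, a finite nonempty set $\mathit{Obs}$ of observations, and a finite set of agents $\mathit{Ag}=\{a_1,\dots,a_m\}$. For a word $w$ we write $w_i$ for its letter at position $i$ (positions start at $0$), $w_{\le i}$ for its prefix ending at position $i$, $w_{\ge i}$ for its suffix starting at position $i$, $|w|$ for its length (finite words) and $\mathit{last}(w)$ for its last letter; $w\preceq w'$ means $w$ is a prefix of $w'$. Syntax of CTL*KΔ$_m$: history formulas $\varphi::=p\mid\neg\varphi\mid\varphi\wedge\varphi\mid\mathbf A\psi\mid\mathbf K_a\varphi\mid\Delta^{o}_a\varphi$ and path formulas $\psi::=\varphi\mid\neg\psi\mid\psi\wedge\psi\mid\mathbf X\psi\mid\psi\,\mathbf U\,\psi$, with $p\in\mathit{AP}$, $a\in\mathit{Ag}$, $o\in\mathit{Obs}$; formulas are history formulas. The knowledge depth of a formula is the maximal nesting depth of operators $\mathbf K_a$ (over all agents). A multiagent model is $M=(\mathit{AP}_f,S,T,V,\{\sim_o\}_{o\in\mathit{Obs}},s_\iota,\vec o_\iota)$ where $\mathit{AP}_f\subseteq\mathit{AP}$ is finite, $S$ is a finite set of states, $T\subseteq S\times S$ is left-total, $V:S\to2^{\mathit{AP}_f}$,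 each $\sim_o$ is an equivalence relation on $S$, $s_\iota\in S$, and $\vec o_\iota\in\mathit{Obs}^{\mathit{Ag}}$ gives each agent an initial observation. Paths are infinite sequences of states $s_0s_1\dots$ with $s_iTs_{i+1}$ (starting anywhere); histories are finite nonempty prefixes of paths. For a tuple $\vec o\in\mathit{Obs}^{\mathit{Ag}}$, $\vec o_a$ is its $a$-component, $\vec o_i=\vec o_{a_i}$, and $\vec o[a\leftarrow o']$ is $\vec o$ with $\vec o_a$ replaced by $o'$. An observation record is a finite word over $\mathit{Obs}\times\mathbb N$; $r_{=n}$ is the subword of $r$ consisting of the pairs with second component $n$; $r$ stops at $n$ if $r_{=m}$ is empty for all $m>n$. A record tuple is $\vec r=(\vec r_a)_{a\in\mathit{Ag}}$; $\vec r\cdot(o,n)_a$ is $\vec r$ with $\vec r_a$ replaced by $\vec r_a\cdot(o,n)$; $\vec r$ stops at a history $h$ if each $\vec r_a$ stops at $|h|-1$. For agent $a$: $\mathit{ol}_a(\vec r,0)=\vec o_{\iota,a}\cdot o_1\cdots o_k$ if $(\vec r_a)_{=0}=(o_1,0)\cdots(o_k,0)$, and $\mathit{ol}_a(\vec r,n+1)=\mathit{last}(\mathit{ol}_a(\vec r,n))\cdot o_1\cdots o_k$ if $(\vec r_a)_{=n+1}=(o_1,n+1)\cdots(o_k,n+1)$. $h\approx^{\vec r}_a h'$ iff $|h|=|h'|$ and for all $i<|h|$ and all $o$ in $\mathit{ol}_a(\vec r,i)$, $h_i\sim_o h'_i$. $\vec o(h,\vec r)$ is the tuple whose $a$-component is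 the last element of $\mathit{ol}_a(\vec r,|h|-1)$. Natural semantics: $h,\vec r\models p$ iff $p\in V(\mathit{last}(h))$; negation and conjunction as usual; $h,\vec r\models\mathbf A\psi$ iff for all paths $\pi$ with $h\preceq\pi$, $\pi,|h|-1,\vec r\models\psi$; $h,\vec r\models\mathbf K_a\varphi$ iff $h',\vec r\models\varphi$ for all histories $h'\approx^{\vec r}_a h$; $h,\vec r\models\Delta^o_a\varphi$ iff $h,\vec r\cdot(o,|h|-1)_a\models\varphi$; $\pi,n,\vec r\models\varphi$ iff $\pi_{\le n},\vec r\models\varphi$; negation and conjunction as usual; $\pi,n,\vec r\models\mathbf X\psi$ iff $\pi,n+1,\vec r\models\psi$; $\pi,n,\vec r\models\psi_1\mathbf U\psi_2$ iff there is $m\ge n$ with $\pi,m,\vec r\models\psi_2$ and $\pi,j,\vec r\models\psi_1$ for all $n\le j<m$. $k$-trees: a $0$-tree is $\langle s,\emptyset,\dots,\emptyset\rangle$ with $s\in S$; a $(k+1)$-tree is $\langle s,F_1,\dots,F_m\rangle$ with $s\in S$ and each $F_i$ a set of $k$-trees; $\mathit{root}(\langle s,F_1,\dots,F_m\rangle)=s$ and $\tau(a_i)=F_i$. $\mathit{KT}^0(h,\vec r)=\langle\mathit{last}(h),\emptyset,\dots,\emptyset\rangle$ and $\mathit{KT}^{k+1}(h,\vec r)=\langle\mathit{last}(h),F_1,\dots,F_m\rangle$ with $F_i=\{\mathit{KT}^k(h',\vec r)\mid h'\approx^{\vec r}_{a_i}h\}$. Updates: $U_T^0(\langle s,\emptyset,\dots\rangle,s',\vec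 o)=\langle s',\emptyset,\dots,\emptyset\rangle$; $U_T^{k+1}(\langle s,F_1,\dots,F_m\rangle,s',\vec o)=\langle s',F'_1,\dots,F'_m\rangle$ with $F'_i=\{U_T^k(\tau,s'',\vec o)\mid\tau\in F_i,\ s''\sim_{\vec o_i}s',\ \mathit{root}(\tau)Ts''\}$. $U_\Delta^0(\langle s,\emptyset,\dots\rangle,o,a_i)=\langle s,\emptyset,\dots,\emptyset\rangle$; $U_\Delta^{k+1}(\langle s,F_1,\dots,F_m\rangle,o,a_i)=\langle s,F'_1,\dots,F'_m\rangle$ with $F'_j=\{U_\Delta^k(\tau,o,a_i)\mid\tau\in F_j\}$ for $j\ne i$ and $F'_i=\{U_\Delta^k(\tau,o,a_i)\mid\tau\in F_i,\ \mathit{root}(\tau)\sim_o s\}$. (Below, $U_T^k,U_\Delta^k$ are applied to trees of the matching depth $k$.) Alternative semantics, for a $k$-tree $\tau$ and $\vec o\in\mathit{Obs}^{\mathit{Ag}}$: $\tau,\vec o\models_I p$ iff $p\in V(\mathit{root}(\tau))$; negation and conjunction as usual; $\tau,\vec o\models_I\mathbf A\psi$ iff for all paths $\pi$ with $\pi_0=\mathit{root}(\tau)$, $\pi,\tau,\vec o\models_I\psi$; $\tau,\vec o\models_I\mathbf K_a\varphi$ iff $\tau',\vec o\models_I\varphi$ for all $\tau'\in\tau(a)$; $\tau,\vec o\models_I\Delta^{o'}_a\varphi$ iff $U_\Delta^k(\tau,o',a),\vec o[a\leftarrow o']\models_I\varphi$; $\pi,\tau,\vec o\models_I\varphi$ iff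 $\tau,\vec o\models_I\varphi$; negation and conjunction as usual; $\pi,\tau,\vec o\models_I\mathbf X\psi$ iff $\pi_{\ge1},U_T^k(\tau,\pi_1,\vec o),\vec o\models_I\psi$; $\pi,\tau,\vec o\models_I\psi_1\mathbf U\psi_2$ iff there is $n\ge0$ with $\pi_{\ge n},(U_T^k)^n(\tau,\pi,\vec o),\vec o\models_I\psi_2$ and $\pi_{\ge j},(U_T^k)^j(\tau,\pi,\vec o),\vec o\models_I\psi_1$ for all $0\le j<n$, where $(U_T^k)^0(\tau,\pi,\vec o)=\tau$ and $(U_T^k)^{n+1}(\tau,\pi,\vec o)=U_T^k((U_T^k)^n(\tau,\pi,\vec o),\pi_{n+1},\vec o)$. *)

theory Defs
  imports Main "HOL-Library.FSet"
begin

datatype ('a, 'ob) hform =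
    Prop nat
  | HNot "('a, 'ob) hform"
  | HAnd "('a, 'ob) hform" "('a, 'ob) hform"
  | All "('a, 'ob) pform"
  | Know 'a "('a, 'ob) hform"
  | Delta 'a 'ob "('a, 'ob) hform"
and ('a, 'ob) pform =
    PH "('a, 'ob) hform"
  | PNot "('a, 'ob) pform"
  | PAnd "('a, 'ob) pform" "('a, 'ob) pform"
  | Next "('a, 'ob) pform"
  | Until "('a, 'ob) pform" "('a, 'ob) pform"

primrec kdepth :: "('a, 'ob) hform \<Rightarrow> nat"
  and kdepth_p :: "('a, 'ob) pform \<Rightarrow> nat" where
  "kdepth (Prop p) = 0"
| "kdepth (HNot f) = kdepth f"
| "kdepth (HAnd f g) = max (kdepth f) (kdepth g)"
| "kdepth (All p) = kdepth_p p"
| "kdepth (Know a f) = Suc (kdepth f)"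
| "kdepth (Delta a ob f) = kdepth f"
| "kdepth_p (PH f) = kdepth f"
| "kdepth_p (PNot p) = kdepth_p p"
| "kdepth_p (PAnd p q) = max (kdepth_p p) (kdepth_p q)"
| "kdepth_p (Next p) = kdepth_p p"
| "kdepth_p (Until p q) = max (kdepth_p p) (kdepth_p q)"

text \<open>The finite set of states S is the universe of a finite type 's.\<close>

record ('s, 'ob, 'a) model =
  APf :: "nat set"
  Trans :: "'s \<Rightarrow> 's \<Rightarrow> bool"
  Val :: "'s \<Rightarrow> nat set"
  Sim :: "'ob \<Rightarrow> 's \<Rightarrow> 's \<Rightarrow> bool"
  sinit :: 's
  oinit :: "'a \<Rightarrow> 'ob"

definition wf_model :: "('s::finite, 'ob::finite, 'a::finite) model \<Rightarrow> bool" where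
  "wf_model M \<longleftrightarrow> finite (APf M) \<and> (\<forall>s. \<exists>s'. Trans M s s')
     \<and> (\<forall>s. Val M s \<subseteq> APf M) \<and> (\<forall>ob. equivp (Sim M ob))"

definition is_path :: "('s, 'ob, 'a) model \<Rightarrow> (nat \<Rightarrow> 's) \<Rightarrow> bool" where
  "is_path M \<pi> \<longleftrightarrow> (\<forall>i. Trans M (\<pi> i) (\<pi> (Suc i)))"

definition is_hist :: "('s, 'ob, 'a) model \<Rightarrow> 's list \<Rightarrow> bool" where
  "is_hist M h \<longleftrightarrow> (\<exists>\<pi>. is_path M \<pi> \<and> h = map \<pi> [0..<length h]) \<and> h \<noteq> []"

definition hprefix :: "'s list \<Rightarrow> (nat \<Rightarrow> 's) \<Rightarrow> bool" where
  "hprefix h \<pi> \<longleftrightarrow> (\<forall>i<length h. \<pi> i = h ! i)"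

definition pprefix :: "(nat \<Rightarrow> 's) \<Rightarrow> nat \<Rightarrow> 's list" where
  "pprefix \<pi> n = map \<pi> [0..<Suc n]"

type_synonym 'ob obsrec = "('ob \<times> nat) list"
type_synonym ('a, 'ob) rtuple = "'a \<Rightarrow> 'ob obsrec"

definition rec_at :: "'ob obsrec \<Rightarrow> nat \<Rightarrow> 'ob obsrec" where
  "rec_at r n = filter (\<lambda>p. snd p = n) r"

definition rec_stops :: "'ob obsrec \<Rightarrow> nat \<Rightarrow> bool" where
  "rec_stops r n \<longleftrightarrow> (\<forall>m>n. rec_at r m = [])"

definition rt_stops :: "('a, 'ob) rtuple \<Rightarrow> 's list \<Rightarrow> bool" where
  "rt_stops r h \<longleftrightarrow> (\<forall>a. rec_stops (r a) (length h - 1))"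

definition rt_add :: "('a, 'ob) rtuple \<Rightarrow> 'a \<Rightarrow> 'ob \<Rightarrow> nat \<Rightarrow> ('a, 'ob) rtuple" where
  "rt_add r a ob n = r(a := r a @ [(ob, n)])"

primrec ol :: "('s, 'ob, 'a) model \<Rightarrow> ('a, 'ob) rtuple \<Rightarrow> 'a \<Rightarrow> nat \<Rightarrow> 'ob list" where
  "ol M r a 0 = oinit M a # map fst (rec_at (r a) 0)"
| "ol M r a (Suc n) = last (ol M r a n) # map fst (rec_at (r a) (Suc n))"

definition hist_eq :: "('s, 'ob, 'a) model \<Rightarrow> ('a, 'ob) rtuple \<Rightarrow> 'a \<Rightarrow> 's list \<Rightarrow> 's list \<Rightarrow> bool" where
  "hist_eq M r a h h' \<longleftrightarrow> length h = length h'
     \<and> (\<forall>i<length h. \<forall>ob\<in>set (ol M r a i). Sim M ob (h ! i) (h' ! i))"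

definition obs_of :: "('s, 'ob, 'a) model \<Rightarrow> 's list \<Rightarrow> ('a, 'ob) rtuple \<Rightarrow> 'a \<Rightarrow> 'ob" where
  "obs_of M h r = (\<lambda>a. last (ol M r a (length h - 1)))"

primrec hsat :: "('s, 'ob, 'a) model \<Rightarrow> ('a, 'ob) hform \<Rightarrow> 's list \<Rightarrow> ('a, 'ob) rtuple \<Rightarrow> bool"
  and psat :: "('s, 'ob, 'a) model \<Rightarrow> ('a, 'ob) pform \<Rightarrow> (nat \<Rightarrow> 's) \<Rightarrow> nat \<Rightarrow> ('a, 'ob) rtuple \<Rightarrow> bool"
where
  "hsat M (Prop p) h r = (p \<in> Val M (last h))"
| "hsat M (HNot f) h r = (\<not> hsat M f h r)"
| "hsat M (HAnd f g) h r = (hsat M f h r \<and> hsat M g h r)"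
| "hsat M (All p) h r = (\<forall>\<pi>. is_path M \<pi> \<and> hprefix h \<pi> \<longrightarrow> psat M p \<pi> (length h - 1) r)"
| "hsat M (Know a f) h r = (\<forall>h'. is_hist M h' \<and> hist_eq M r a h h' \<longrightarrow> hsat M f h' r)"
| "hsat M (Delta a ob f) h r = hsat M f h (rt_add r a ob (length h - 1))"
| "psat M (PH f) \<pi> n r = hsat M f (pprefix \<pi> n) r"
| "psat M (PNot p) \<pi> n r = (\<not> psat M p \<pi> n r)"
| "psat M (PAnd p q) \<pi> n r = (psat M p \<pi> n r \<and> psat M q \<pi> n r)"
| "psat M (Next p) \<pi> n r = psat M p \<pi> (Suc n) r"
| "psat M (Until p q) \<pi> n r =
     (\<exists>m\<ge>n. psat M q \<pi> m r \<and> (\<forall>j. n \<le> j \<and> j < m \<longrightarrow> psat M p \<pi> j r))"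

text \<open>The depth k is not part of the type; it is carried explicitly by the functions below,
  which are only applied to trees of matching depth.\<close>

datatype ('s, 'a) ktree = KT (root: 's) (children: "'a \<Rightarrow> ('s, 'a) ktree fset")

primrec KTof :: "('s, 'ob, 'a) model \<Rightarrow> nat \<Rightarrow> 's list \<Rightarrow> ('a, 'ob) rtuple \<Rightarrow> ('s, 'a) ktree" where
  "KTof M 0 h r = KT (last h) (\<lambda>_. {||})"
| "KTof M (Suc k) h r = KT (last h)
     (\<lambda>a. Abs_fset {KTof M k h' r | h'. is_hist M h' \<and> hist_eq M r a h h'})"

primrec updT :: "('s, 'ob, 'a) model \<Rightarrow> nat \<Rightarrow> ('s, 'a) ktree \<Rightarrow> 's \<Rightarrow> ('a \<Rightarrow> 'ob) \<Rightarrow> ('s, 'a) ktree" where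
  "updT M 0 t s' ov = KT s' (\<lambda>_. {||})"
| "updT M (Suc k) t s' ov = KT s'
     (\<lambda>i. Abs_fset {updT M k t' s'' ov | t' s''. t' |\<in>| children t i
                      \<and> Sim M (ov i) s'' s' \<and> Trans M (root t') s''})"

primrec updD :: "('s, 'ob, 'a) model \<Rightarrow> nat \<Rightarrow> ('s, 'a) ktree \<Rightarrow> 'ob \<Rightarrow> 'a \<Rightarrow> ('s, 'a) ktree" where
  "updD M 0 t ob a = KT (root t) (\<lambda>_. {||})"
| "updD M (Suc k) t ob a = KT (root t)
     (\<lambda>j. if j = a
          then (\<lambda>t'. updD M k t' ob a) |`| ffilter (\<lambda>t'. Sim M ob (root t') (root t)) (children t j)
          else (\<lambda>t'. updD M k t' ob a) |`| children t j)"

primrec updT_iter :: "('s, 'ob, 'a) model \<Rightarrow> nat \<Rightarrow> ('s, 'a) ktree \<Rightarrow> (nat \<Rightarrow> 's) \<Rightarrow> ('a \<Rightarrow> 'ob) \<Rightarrow> nat \<Rightarrow> ('s, 'a) ktree" where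
  "updT_iter M k t \<pi> ov 0 = t"
| "updT_iter M k t \<pi> ov (Suc n) = updT M k (updT_iter M k t \<pi> ov n) (\<pi> (Suc n)) ov"

definition suffix_path :: "(nat \<Rightarrow> 's) \<Rightarrow> nat \<Rightarrow> nat \<Rightarrow> 's" where
  "suffix_path \<pi> n = (\<lambda>i. \<pi> (n + i))"

primrec isat :: "('s, 'ob, 'a) model \<Rightarrow> ('a, 'ob) hform \<Rightarrow> nat \<Rightarrow> ('s, 'a) ktree \<Rightarrow> ('a \<Rightarrow> 'ob) \<Rightarrow> bool"
  and ipsat :: "('s, 'ob, 'a) model \<Rightarrow> ('a, 'ob) pform \<Rightarrow> nat \<Rightarrow> (nat \<Rightarrow> 's) \<Rightarrow> ('s, 'a) ktree \<Rightarrow> ('a \<Rightarrow> 'ob) \<Rightarrow> bool"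
where
  "isat M (Prop p) k t ov = (p \<in> Val M (root t))"
| "isat M (HNot f) k t ov = (\<not> isat M f k t ov)"
| "isat M (HAnd f g) k t ov = (isat M f k t ov \<and> isat M g k t ov)"
| "isat M (All p) k t ov = (\<forall>\<pi>. is_path M \<pi> \<and> \<pi> 0 = root t \<longrightarrow> ipsat M p k \<pi> t ov)"
| "isat M (Know a f) k t ov = (\<forall>t'. t' |\<in>| children t a \<longrightarrow> isat M f (k - 1) t' ov)"
| "isat M (Delta a ob f) k t ov = isat M f k (updD M k t ob a) (ov(a := ob))"
| "ipsat M (PH f) k \<pi> t ov = isat M f k t ov"
| "ipsat M (PNot p) k \<pi> t ov = (\<not> ipsat M p k \<pi> t ov)"
| "ipsat M (PAnd p q) k \<pi> t ov = (ipsat M p k \<pi> t ov \<and> ipsat M q k \<pi> t ov)"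
| "ipsat M (Next p) k \<pi> t ov = ipsat M p k (suffix_path \<pi> 1) (updT M k t (\<pi> 1) ov) ov"
| "ipsat M (Until p q) k \<pi> t ov =
     (\<exists>n. ipsat M q k (suffix_path \<pi> n) (updT_iter M k t \<pi> ov n) ov
        \<and> (\<forall>j<n. ipsat M p k (suffix_path \<pi> j) (updT_iter M k t \<pi> ov j) ov))"

end

theory Submission
  imports Defs
begin

lemma fset_Abs: "finite X \<Longrightarrow> fset (Abs_fset X) = X"
  by (simp add: Abs_fset_inverse)

lemma fin_KT: "finite {KTof M k h' r | h'. is_hist (M::('s::finite,'o,'a) model) h' \<and> hist_eq M r a h h'}"
proof -
  have "{KTof M k h' r | h'. is_hist M h' \<and> hist_eq M r a h h'}
        \<subseteq> (\<lambda>h'. KTof M k h' r) ` {xs. set xs \<subseteq> UNIV \<and> length xs = length h}"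
    by (auto simp: hist_eq_def)
  moreover have "finite {xs::'s list. set xs \<subseteq> UNIV \<and> length xs = length h}"
    by (rule finite_lists_length_eq) simp
  ultimately show ?thesis by (meson finite_imageI finite_subset)
qed

lemma root_KTof: "root (KTof M k h r) = last h"
  by (cases k) auto

lemma children_KTof: "fset (children (KTof M (Suc k) h r) a) =
   {KTof M k h' r | h'. is_hist (M::('s::finite,'o,'a) model) h' \<and> hist_eq M r a h h'}"
  using fset_Abs[OF fin_KT] by simp

lemma path_exists:
  assumes "wf_model M" shows "\<exists>\<pi>. is_path M \<pi> \<and> \<pi> 0 = s"
proof -
  have T: "\<forall>x. \<exists>y. Trans M x y" using assms by (simp add: wf_model_def)
  define \<pi> where "\<pi> = rec_nat s (\<lambda>_ x. SOME y. Trans M x y)"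
  have "is_path M \<pi>" unfolding is_path_def \<pi>_def
    using T by (auto intro: someI_ex)
  moreover have "\<pi> 0 = s" by (simp add: \<pi>_def)
  ultimately show ?thesis by blast
qed

lemma hist_chain: "is_hist M h \<Longrightarrow> Suc i < length h \<Longrightarrow> Trans M (h!i) (h!Suc i)"
  unfolding is_hist_def is_path_def
  by (metis Suc_lessD diff_zero length_upt nth_map_upt plus_nat.add_0)

lemma hist_char:
  assumes wf: "wf_model M"
  shows "is_hist M h \<longleftrightarrow> h \<noteq> [] \<and> (\<forall>i. Suc i < length h \<longrightarrow> Trans M (h!i) (h!Suc i))"
proof
  assume "is_hist M h" thus "h \<noteq> [] \<and> (\<forall>i. Suc i < length h \<longrightarrow> Trans M (h!i) (h!Suc i))"
    using hist_chain by (auto simp: is_hist_def)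
next
  assume A: "h \<noteq> [] \<and> (\<forall>i. Suc i < length h \<longrightarrow> Trans M (h!i) (h!Suc i))"
  obtain p where p: "is_path M p" "p 0 = last h" using path_exists[OF wf] by blast
  define \<pi> where "\<pi> i = (if i < length h then h ! i else p (i - (length h - 1)))" for i
  have "is_path M \<pi>" unfolding is_path_def
  proof
    fix i
    show "Trans M (\<pi> i) (\<pi> (Suc i))"
    proof (cases "Suc i < length h")
      case True thus ?thesis using A by (simp add: \<pi>_def)
    next
      case False
      show ?thesis
      proof (cases "Suc i = length h")
        case True
        hence "i = length h - 1" by simp
        hence "\<pi> i = p 0" using A p by (simp add: \<pi>_def last_conv_nth)
        moreover have "\<pi> (Suc i) = p 1" using True by (simp add: \<pi>_def)
        ultimately show ?thesis using p unfolding is_path_def by (metis One_nat_def)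
      next
        case F2: False
        hence "\<pi> i = p (i - (length h - 1))" "\<pi> (Suc i) = p (Suc (i - (length h - 1)))"
          using False A by (auto simp: \<pi>_def Suc_diff_le)
        thus ?thesis using p unfolding is_path_def by simp
      qed
    qed
  qed
  moreover have "h = map \<pi> [0..<length h]"
    by (rule nth_equalityI) (auto simp: \<pi>_def)
  ultimately show "is_hist M h" using A by (auto simp: is_hist_def)
qed

lemma Sim_sym: "wf_model M \<Longrightarrow> Sim M ob x y \<Longrightarrow> Sim M ob y x"
  unfolding wf_model_def by (meson equivp_symp)

lemma hist_eq_len: "hist_eq M r a h h' \<Longrightarrow> length h' = length h"
  by (simp add: hist_eq_def)

lemma hist_eq_snoc:
  "hist_eq M r a (h@[s]) h'' \<longleftrightarrow> (\<exists>h' s''. h'' = h'@[s''] \<and> hist_eq M r a h h'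
     \<and> (\<forall>ob\<in>set (ol M r a (length h)). Sim M ob s s''))"
proof
  assume H: "hist_eq M r a (h@[s]) h''"
  hence L: "length h'' = Suc (length h)" by (simp add: hist_eq_def)
  hence "h'' \<noteq> []" by auto
  hence E: "h'' = butlast h'' @ [last h'']" by simp
  have "hist_eq M r a h (butlast h'')"
    unfolding hist_eq_def
  proof (intro conjI allI impI ballI)
    show "length h = length (butlast h'')" using L by simp
    fix i ob assume i: "i < length h" and ob: "ob \<in> set (ol M r a i)"
    have "Sim M ob ((h@[s]) ! i) (h'' ! i)" using H i ob by (simp add: hist_eq_def)
    moreover have "h'' ! i = butlast h'' ! i" using i L by (simp add: nth_butlast)
    ultimately show "Sim M ob (h ! i) (butlast h'' ! i)" using i by (simp add: nth_append)
  qed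
  moreover have "\<forall>ob\<in>set (ol M r a (length h)). Sim M ob s (last h'')"
  proof
    fix ob assume ob: "ob \<in> set (ol M r a (length h))"
    have "Sim M ob ((h@[s]) ! length h) (h'' ! length h)" using H ob unfolding hist_eq_def by auto
    moreover have "h'' ! length h = last h''" using L \<open>h'' \<noteq> []\<close> by (simp add: last_conv_nth)
    ultimately show "Sim M ob s (last h'')" by simp
  qed
  ultimately show "\<exists>h' s''. h'' = h'@[s''] \<and> hist_eq M r a h h'
     \<and> (\<forall>ob\<in>set (ol M r a (length h)). Sim M ob s s'')" using E by blast
next
  assume "\<exists>h' s''. h'' = h'@[s''] \<and> hist_eq M r a h h'
     \<and> (\<forall>ob\<in>set (ol M r a (length h)). Sim M ob s s'')"
  then obtain h' s'' where h'': "h'' = h'@[s'']" and he: "hist_eq M r a h h'"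
    and S: "\<forall>ob\<in>set (ol M r a (length h)). Sim M ob s s''" by blast
  show "hist_eq M r a (h@[s]) h''"
    unfolding hist_eq_def
  proof (intro conjI allI impI ballI)
    show "length (h@[s]) = length h''" using he h'' by (simp add: hist_eq_def)
    fix i ob assume i: "i < length (h@[s])" and ob: "ob \<in> set (ol M r a i)"
    show "Sim M ob ((h@[s]) ! i) (h'' ! i)"
    proof (cases "i < length h")
      case True thus ?thesis using he ob h'' by (simp add: hist_eq_def nth_append)
    next
      case False
      hence "i = length h" using i by simp
      thus ?thesis using S ob h'' he by (simp add: hist_eq_def nth_append)
    qed
  qed
qed

lemma hist_snoc:
  assumes wf: "wf_model M" and ne: "h \<noteq> []"
  shows "is_hist M (h@[s]) \<longleftrightarrow> is_hist M h \<and> Trans M (last h) s"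
proof -
  have "(\<forall>i. Suc i < length (h@[s]) \<longrightarrow> Trans M ((h@[s])!i) ((h@[s])!Suc i)) \<longleftrightarrow>
        (\<forall>i. Suc i < length h \<longrightarrow> Trans M (h!i) (h!Suc i)) \<and> Trans M (last h) s"
  proof safe
    fix i assume A: "\<forall>i. Suc i < length (h@[s]) \<longrightarrow> Trans M ((h@[s])!i) ((h@[s])!Suc i)"
      and i: "Suc i < length h"
    show "Trans M (h!i) (h!Suc i)" using A[rule_format, of i] i by (simp add: nth_append)
  next
    assume A: "\<forall>i. Suc i < length (h@[s]) \<longrightarrow> Trans M ((h@[s])!i) ((h@[s])!Suc i)"
    show "Trans M (last h) s" using A[rule_format, of "length h - 1"] ne
      by (simp add: nth_append last_conv_nth)
  next
    fix i assume A: "\<forall>i. Suc i < length h \<longrightarrow> Trans M (h!i) (h!Suc i)"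
      and T: "Trans M (last h) s" and i: "Suc i < length (h@[s])"
    show "Trans M ((h@[s])!i) ((h@[s])!Suc i)"
    proof (cases "Suc i < length h")
      case True thus ?thesis using A by (simp add: nth_append)
    next
      case False
      hence "i = length h - 1" using i by simp
      thus ?thesis using T ne by (simp add: nth_append last_conv_nth)
    qed
  qed
  thus ?thesis using hist_char[OF wf] ne by auto
qed

lemma ol_stop:
  assumes "rt_stops r h" "h \<noteq> []"
  shows "ol M r a (length h) = [last (ol M r a (length h - 1))]"
proof -
  obtain n where L: "length h = Suc n" using assms(2) by (cases h) auto
  have "rec_at (r a) (length h) = []" using assms(1) assms(2)
    by (simp add: rt_stops_def rec_stops_def)
  thus ?thesis using L by simp
qed

lemma obs_of_len: "length h = length h' \<Longrightarrow> obs_of M h r = obs_of M h' r"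
  by (simp add: obs_of_def)

lemma obs_of_snoc:
  assumes "rt_stops r h" "h \<noteq> []"
  shows "obs_of M (h@[s]) r = obs_of M h r"
  by (auto simp: obs_of_def fun_eq_iff ol_stop[OF assms])

lemma rt_stops_len: "rt_stops r h \<Longrightarrow> length h \<le> length h' \<Longrightarrow> rt_stops r h'"
  unfolding rt_stops_def rec_stops_def by auto

lemma KTof_snoc:
  fixes M :: "('s::finite,'o::finite,'a::finite) model"
  assumes wf: "wf_model M"
  shows "is_hist M h \<Longrightarrow> rt_stops r h \<Longrightarrow>
    KTof M k (h@[s]) r = updT M k (KTof M k h r) s (obs_of M h r)"
proof (induction k arbitrary: h s)
  case 0 thus ?case by simp
next
  case (Suc k)
  have ne: "h \<noteq> []" using Suc.prems(1) by (simp add: is_hist_def)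
  let ?ov = "obs_of M h r"
  have olS: "set (ol M r a (length h)) = {?ov a}" for a
    by (auto simp: obs_of_def ol_stop[OF Suc.prems(2) ne])
  have "{KTof M k h'' r | h''. is_hist M h'' \<and> hist_eq M r a (h@[s]) h''}
     = {updT M k t' s'' ?ov | t' s''. t' |\<in>| children (KTof M (Suc k) h r) a
          \<and> Sim M (?ov a) s'' s \<and> Trans M (root t') s''}" (is "?A = ?B") for a
  proof
    show "?A \<subseteq> ?B"
    proof
      fix x assume "x \<in> ?A"
      then obtain h'' where x: "x = KTof M k h'' r" and hh: "is_hist M h''"
        and he: "hist_eq M r a (h@[s]) h''" by blast
      then obtain h' s'' where h'': "h'' = h'@[s'']" and he': "hist_eq M r a h h'"
        and S: "Sim M (?ov a) s s''" using hist_eq_snoc[of M r a h s h''] olS by auto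
      have ne': "h' \<noteq> []" using he' ne hist_eq_len by fastforce
      have hh': "is_hist M h'" and T: "Trans M (last h') s''"
        using hh h'' hist_snoc[OF wf ne'] by auto
      have st: "rt_stops r h'" using rt_stops_len[OF Suc.prems(2), of h'] hist_eq_len[OF he'] by simp
      have ov: "obs_of M h' r = ?ov" using obs_of_len hist_eq_len[OF he'] by metis
      have "x = updT M k (KTof M k h' r) s'' ?ov" using Suc.IH[OF hh' st] x h'' ov by simp
      moreover have "KTof M k h' r |\<in>| children (KTof M (Suc k) h r) a"
        using children_KTof[of M k h r a] hh' he' by auto
      moreover have "Sim M (?ov a) s'' s" using Sim_sym[OF wf S] .
      moreover have "Trans M (root (KTof M k h' r)) s''" using T by (simp add: root_KTof)
      ultimately show "x \<in> ?B" by blast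
    qed
  next
    show "?B \<subseteq> ?A"
    proof
      fix x assume "x \<in> ?B"
      then obtain t' s'' where x: "x = updT M k t' s'' ?ov"
        and t': "t' |\<in>| children (KTof M (Suc k) h r) a"
        and S: "Sim M (?ov a) s'' s" and T: "Trans M (root t') s''" by blast
      obtain h' where t'd: "t' = KTof M k h' r" and hh': "is_hist M h'" and he': "hist_eq M r a h h'"
        using t' children_KTof[of M k h r a] by auto
      have ne': "h' \<noteq> []" using he' ne hist_eq_len by fastforce
      have st: "rt_stops r h'" using rt_stops_len[OF Suc.prems(2), of h'] hist_eq_len[OF he'] by simp
      have ov: "obs_of M h' r = ?ov" using obs_of_len hist_eq_len[OF he'] by metis
      have T': "Trans M (last h') s''" using T t'd root_KTof by metis
      have "x = KTof M k (h'@[s'']) r" using Suc.IH[OF hh' st] x t'd ov by simp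
      moreover have "is_hist M (h'@[s''])" using hist_snoc[OF wf ne'] hh' T' by simp
      moreover have "hist_eq M r a (h@[s]) (h'@[s''])"
        using hist_eq_snoc[of M r a h s "h'@[s'']"] olS he' Sim_sym[OF wf S] by auto
      ultimately show "x \<in> ?A" by blast
    qed
  qed
  thus ?case by (simp only: KTof.simps updT.simps) (simp add: last_snoc)
qed

lemma rec_at_add: "rec_at (rt_add r a ob n b) i = rec_at (r b) i @ (if b = a \<and> i = n then [(ob,n)] else [])"
  by (simp add: rt_add_def rec_at_def)

lemma ol_add: "i \<le> n \<Longrightarrow> ol M (rt_add r a ob n) b i = (if b = a \<and> i = n then ol M r b i @ [ob] else ol M r b i)"
proof (induction i)
  case 0 thus ?case by (simp add: rec_at_add)
next
  case (Suc i)
  have IH: "ol M (rt_add r a ob n) b i = ol M r b i" using Suc by simp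
  have e: "ol M (rt_add r a ob n) b (Suc i) = last (ol M (rt_add r a ob n) b i) # map fst (rec_at (rt_add r a ob n b) (Suc i))" by simp
  have e2: "ol M r b (Suc i) = last (ol M r b i) # map fst (rec_at (r b) (Suc i))" by simp
  show ?case unfolding e e2 IH by (simp add: rec_at_add)
qed

lemma hist_eq_add:
  assumes "length h = Suc n"
  shows "hist_eq M (rt_add r a ob n) b h h' \<longleftrightarrow> hist_eq M r b h h' \<and> (b = a \<longrightarrow> Sim M ob (last h) (last h'))"
proof -
  have lh: "last h = h ! n" using assms by (cases h rule: rev_cases) auto
  show ?thesis
  proof
    assume H: "hist_eq M (rt_add r a ob n) b h h'"
    have "hist_eq M r b h h'" unfolding hist_eq_def
    proof (intro conjI allI impI ballI)
      show "length h = length h'" using H by (simp add: hist_eq_def)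
      fix i ob' assume i: "i < length h" and o: "ob' \<in> set (ol M r b i)"
      have "ob' \<in> set (ol M (rt_add r a ob n) b i)" using o i assms by (auto simp: ol_add)
      thus "Sim M ob' (h ! i) (h' ! i)" using H i by (simp add: hist_eq_def)
    qed
    moreover have "b = a \<longrightarrow> Sim M ob (last h) (last h')"
    proof
      assume b: "b = a"
      have "ob \<in> set (ol M (rt_add r a ob n) b n)" using b by (simp add: ol_add)
      hence "Sim M ob (h ! n) (h' ! n)" using H assms by (simp add: hist_eq_def)
      moreover have "last h' = h' ! n" using H assms
        by (metis hist_eq_def diff_Suc_1 last_conv_nth list.size(3) nat.distinct(1))
      ultimately show "Sim M ob (last h) (last h')" using lh by simp
    qed
    ultimately show "hist_eq M r b h h' \<and> (b = a \<longrightarrow> Sim M ob (last h) (last h'))" by blast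
  next
    assume H: "hist_eq M r b h h' \<and> (b = a \<longrightarrow> Sim M ob (last h) (last h'))"
    have lh': "last h' = h' ! n" using H assms
      by (metis hist_eq_def diff_Suc_1 last_conv_nth list.size(3) nat.distinct(1))
    show "hist_eq M (rt_add r a ob n) b h h'" unfolding hist_eq_def
    proof (intro conjI allI impI ballI)
      show "length h = length h'" using H by (simp add: hist_eq_def)
      fix i ob' assume i: "i < length h" and o: "ob' \<in> set (ol M (rt_add r a ob n) b i)"
      have "ob' \<in> set (ol M r b i) \<or> (b = a \<and> i = n \<and> ob' = ob)"
        using o i assms by (auto simp: ol_add split: if_splits)
      thus "Sim M ob' (h ! i) (h' ! i)" using H i lh lh' by (auto simp: hist_eq_def)
    qed
  qed
qed

lemma obs_add: "length h = Suc n \<Longrightarrow> obs_of M h (rt_add r a ob n) = (obs_of M h r)(a := ob)"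
  by (auto simp: obs_of_def ol_add fun_eq_iff)

lemma rt_stops_add: "rt_stops r h \<Longrightarrow> length h = Suc n \<Longrightarrow> rt_stops (rt_add r a ob n) h"
  by (simp add: rt_stops_def rec_stops_def rec_at_add)

lemma fset_eq_Abs: "fset G = Y \<Longrightarrow> Abs_fset Y = G"
  by (metis fset_inverse)

lemma KTof_add:
  fixes M :: "('s::finite,'o::finite,'a::finite) model"
  assumes wf: "wf_model M"
  shows "length h = Suc n \<Longrightarrow> KTof M k h (rt_add r a ob n) = updD M k (KTof M k h r) ob a"
proof (induction k arbitrary: h)
  case 0 thus ?case by simp
next
  case (Suc k)
  let ?r' = "rt_add r a ob n"
  let ?F = "\<lambda>t'. updD M k t' ob a"
  let ?X = "\<lambda>j. {KTof M k h' r | h'. is_hist M h' \<and> hist_eq M r j h h'}"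
  have IH: "hist_eq M r j h h' \<Longrightarrow> KTof M k h' ?r' = ?F (KTof M k h' r)" for j h'
    using Suc.IH[of h'] Suc.prems hist_eq_len by metis
  have Y: "{KTof M k h' ?r' | h'. is_hist M h' \<and> hist_eq M ?r' j h h'}
     = fset (if j = a then ?F |`| ffilter (\<lambda>t'. Sim M ob (root t') (root (KTof M (Suc k) h r))) (children (KTof M (Suc k) h r) j)
          else ?F |`| children (KTof M (Suc k) h r) j)" for j
  proof (cases "j = a")
    case True
    have "{KTof M k h' ?r' | h'. is_hist M h' \<and> hist_eq M ?r' j h h'}
       = ?F ` {t \<in> ?X j. Sim M ob (root t) (last h)}"
    proof (rule set_eqI, rule iffI)
      fix x assume "x \<in> {KTof M k h' ?r' | h'. is_hist M h' \<and> hist_eq M ?r' j h h'}"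
      then obtain h' where x: "x = KTof M k h' ?r'" and hh: "is_hist M h'" and he: "hist_eq M ?r' j h h'" by blast
      have he2: "hist_eq M r j h h'" and S: "Sim M ob (last h) (last h')"
        using he hist_eq_add[OF Suc.prems, of M r a ob j] True by auto
      have "x = ?F (KTof M k h' r)" using x IH[OF he2] by simp
      moreover have "KTof M k h' r \<in> {t \<in> ?X j. Sim M ob (root t) (last h)}"
        using hh he2 Sim_sym[OF wf S] by (auto simp: root_KTof)
      ultimately show "x \<in> ?F ` {t \<in> ?X j. Sim M ob (root t) (last h)}" by blast
    next
      fix x assume "x \<in> ?F ` {t \<in> ?X j. Sim M ob (root t) (last h)}"
      then obtain h' where x: "x = ?F (KTof M k h' r)" and hh: "is_hist M h'" and he2: "hist_eq M r j h h'"
        and S: "Sim M ob (last h') (last h)" by (auto simp: root_KTof)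
      have he: "hist_eq M ?r' j h h'" using he2 Sim_sym[OF wf S] hist_eq_add[OF Suc.prems, of M r a ob j] True by auto
      have "x = KTof M k h' ?r'" using x IH[OF he2] by simp
      thus "x \<in> {KTof M k h' ?r' | h'. is_hist M h' \<and> hist_eq M ?r' j h h'}" using hh he by blast
    qed
    thus ?thesis using True children_KTof[of M k h r j]
      by (simp add: ffilter.rep_eq fimage.rep_eq root_KTof filter_fset Int_def conj_commute)
  next
    case False
    have "{KTof M k h' ?r' | h'. is_hist M h' \<and> hist_eq M ?r' j h h'} = ?F ` ?X j"
      using hist_eq_add[OF Suc.prems, of M r a ob j] False IH by (auto; metis)
    thus ?thesis using False children_KTof[of M k h r j]
      by (simp add: fimage.rep_eq)
  qed
  show ?case
    apply (simp only: KTof.simps updD.simps)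
    apply (simp add: root_KTof)
    apply (rule ext)
    using fset_eq_Abs[OF Y[symmetric]] by (simp add: root_KTof)
qed

lemma pprefix_Suc: "pprefix \<pi> (Suc m) = pprefix \<pi> m @ [\<pi> (Suc m)]"
  by (simp add: pprefix_def)

lemma pprefix_len[simp]: "length (pprefix \<pi> m) = Suc m"
  by (simp add: pprefix_def)

lemma pprefix_ne[simp]: "pprefix \<pi> m \<noteq> []"
  by (simp add: pprefix_def)

lemma hist_pprefix: "is_path M \<pi> \<Longrightarrow> is_hist M (pprefix \<pi> m)"
  unfolding is_hist_def pprefix_def by auto

lemma suffix_comp: "suffix_path (suffix_path \<pi> a) b = suffix_path \<pi> (a+b)"
  by (simp add: suffix_path_def add.assoc)

lemma suffix_app: "suffix_path \<pi> m i = \<pi> (m + i)"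
  by (simp add: suffix_path_def)

lemma path_suffix: "is_path M \<pi> \<Longrightarrow> is_path M (suffix_path \<pi> m)"
  by (simp add: is_path_def suffix_app)

lemma iter_KTof:
  fixes M :: "('s::finite,'o::finite,'a::finite) model"
  assumes wf: "wf_model M" and p: "is_path M \<pi>" and st: "rt_stops r (pprefix \<pi> m)"
  shows "updT_iter M k (KTof M k (pprefix \<pi> m) r) (suffix_path \<pi> m) (obs_of M (pprefix \<pi> m) r) j
           = KTof M k (pprefix \<pi> (m+j)) r
        \<and> obs_of M (pprefix \<pi> (m+j)) r = obs_of M (pprefix \<pi> m) r"
proof (induction j)
  case 0 thus ?case by simp
next
  case (Suc j)
  have st': "rt_stops r (pprefix \<pi> (m+j))" using rt_stops_len[OF st, of "pprefix \<pi> (m+j)"] by simp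
  have "KTof M k (pprefix \<pi> (m + Suc j)) r
     = updT M k (KTof M k (pprefix \<pi> (m+j)) r) (\<pi> (Suc (m+j))) (obs_of M (pprefix \<pi> (m+j)) r)"
    using KTof_snoc[OF wf hist_pprefix[OF p] st'] by (simp add: pprefix_Suc)
  moreover have "obs_of M (pprefix \<pi> (m + Suc j)) r = obs_of M (pprefix \<pi> (m+j)) r"
    using obs_of_snoc[OF st'] by (simp add: pprefix_Suc)
  ultimately show ?case using Suc.IH by (simp add: suffix_app)
qed

lemma main_lemma:
  fixes M :: "('s::finite,'o::finite,'a::finite) model"
  assumes wf: "wf_model M"
  shows "(\<forall>k h r. kdepth \<phi> \<le> k \<longrightarrow> is_hist M h \<longrightarrow> rt_stops r h \<longrightarrow>
            (hsat M \<phi> h r \<longleftrightarrow> isat M \<phi> k (KTof M k h r) (obs_of M h r)))"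
    and "(\<forall>k \<pi> m r. kdepth_p \<psi> \<le> k \<longrightarrow> is_path M \<pi> \<longrightarrow> rt_stops r (pprefix \<pi> m) \<longrightarrow>
            (psat M \<psi> \<pi> m r \<longleftrightarrow> ipsat M \<psi> k (suffix_path \<pi> m) (KTof M k (pprefix \<pi> m) r) (obs_of M (pprefix \<pi> m) r)))"
proof (induction \<phi> and \<psi>)
  case (Prop p) thus ?case by (simp add: root_KTof)
next
  case (HNot f) thus ?case by simp
next
  case (HAnd f g) thus ?case by auto
next
  case (All p)
  show ?case
  proof (intro allI impI)
    fix k h and r :: "('a,'o) rtuple" assume kd: "kdepth (All p) \<le> k" and hh: "is_hist M h" and st: "rt_stops r h"
    have ne: "h \<noteq> []" using hh by (simp add: is_hist_def)
    obtain n where L: "length h = Suc n" using ne by (cases h) auto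
    have lh: "last h = h ! n" using L by (cases h rule: rev_cases) auto
    have IHp: "is_path M \<pi> \<Longrightarrow> hprefix h \<pi> \<Longrightarrow> (psat M p \<pi> n r \<longleftrightarrow>
       ipsat M p k (suffix_path \<pi> n) (KTof M k h r) (obs_of M h r))" for \<pi>
    proof -
      assume pp: "is_path M \<pi>" and hp: "hprefix h \<pi>"
      have "pprefix \<pi> n = h" unfolding pprefix_def
        by (rule nth_equalityI) (use L hp in \<open>auto simp: hprefix_def nth_append simp del: upt_Suc\<close>)
      thus ?thesis using All.IH kd pp st by auto
    qed
    show "hsat M (All p) h r \<longleftrightarrow> isat M (All p) k (KTof M k h r) (obs_of M h r)"
    proof
      assume H: "hsat M (All p) h r"
      show "isat M (All p) k (KTof M k h r) (obs_of M h r)"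
        unfolding isat.simps
      proof (intro allI impI)
        fix \<pi>' assume A: "is_path M \<pi>' \<and> \<pi>' 0 = root (KTof M k h r)"
        define \<pi> where "\<pi> i = (if i < n then h ! i else \<pi>' (i - n))" for i
        have p0: "\<pi>' 0 = h ! n" using A lh by (simp add: root_KTof)
        have pp: "is_path M \<pi>" unfolding is_path_def
        proof
          fix i
          show "Trans M (\<pi> i) (\<pi> (Suc i))"
          proof (cases "Suc i < n")
            case True thus ?thesis using hist_chain[OF hh, of i] L by (simp add: \<pi>_def)
          next
            case False
            show ?thesis
            proof (cases "Suc i = n")
              case True thus ?thesis using hist_chain[OF hh, of i] L p0 by (simp add: \<pi>_def)
            next
              case F2: False
              hence "\<pi> i = \<pi>' (i - n)" "\<pi> (Suc i) = \<pi>' (Suc (i - n))"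
                using False by (auto simp: \<pi>_def Suc_diff_le)
              thus ?thesis using A unfolding is_path_def by simp
            qed
          qed
        qed
        have hp: "hprefix h \<pi>" unfolding hprefix_def
        proof (intro allI impI)
          fix i assume "i < length h"
          thus "\<pi> i = h ! i" using L p0 by (cases "i < n") (auto simp: \<pi>_def less_Suc_eq)
        qed
        have "suffix_path \<pi> n = \<pi>'" by (auto simp: \<pi>_def suffix_path_def)
        moreover have "psat M p \<pi> n r" using H pp hp L by simp
        ultimately show "ipsat M p k \<pi>' (KTof M k h r) (obs_of M h r)" using IHp[OF pp hp] by simp
      qed
    next
      assume I: "isat M (All p) k (KTof M k h r) (obs_of M h r)"
      show "hsat M (All p) h r" unfolding hsat.simps
      proof (intro allI impI)
        fix \<pi> assume A: "is_path M \<pi> \<and> hprefix h \<pi>"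
        have "\<pi> n = root (KTof M k h r)" using A L lh by (simp add: root_KTof hprefix_def)
        hence "ipsat M p k (suffix_path \<pi> n) (KTof M k h r) (obs_of M h r)"
          using I A path_suffix[of M \<pi> n] by (simp add: suffix_app)
        thus "psat M p \<pi> (length h - 1) r" using IHp A L by simp
      qed
    qed
  qed
next
  case (Know a f)
  show ?case
  proof (intro allI impI)
    fix k h and r :: "('a,'o) rtuple" assume kd: "kdepth (Know a f) \<le> k" and hh: "is_hist M h" and st: "rt_stops r h"
    obtain k' where k: "k = Suc k'" and kd': "kdepth f \<le> k'" using kd by (cases k) auto
    have "hsat M f h' r \<longleftrightarrow> isat M f k' (KTof M k' h' r) (obs_of M h r)"
      if "is_hist M h'" "hist_eq M r a h h'" for h'
      using Know.IH kd' that rt_stops_len[OF st, of h'] hist_eq_len[OF that(2)]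
        obs_of_len[OF hist_eq_len[OF that(2)], of M r] by auto
    thus "hsat M (Know a f) h r \<longleftrightarrow> isat M (Know a f) k (KTof M k h r) (obs_of M h r)"
      using children_KTof[of M k' h r a] k by auto
  qed
next
  case (Delta a ob f)
  show ?case
  proof (intro allI impI)
    fix k h and r :: "('a,'o) rtuple" assume kd: "kdepth (Delta a ob f) \<le> k" and hh: "is_hist M h" and st: "rt_stops r h"
    have ne: "h \<noteq> []" using hh by (simp add: is_hist_def)
    obtain n where L: "length h = Suc n" using ne by (cases h) auto
    have "hsat M f h (rt_add r a ob n) \<longleftrightarrow>
       isat M f k (KTof M k h (rt_add r a ob n)) (obs_of M h (rt_add r a ob n))"
      using Delta.IH kd hh rt_stops_add[OF st L] by auto
    thus "hsat M (Delta a ob f) h r \<longleftrightarrow> isat M (Delta a ob f) k (KTof M k h r) (obs_of M h r)"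
      using KTof_add[OF wf L, of k r a ob] obs_add[OF L, of M r a ob] L by simp
  qed
next
  case (PH f)
  thus ?case using hist_pprefix[of M] by simp
next
  case (PNot p) thus ?case by simp
next
  case (PAnd p q) thus ?case by auto
next
  case (Next p)
  show ?case
  proof (intro allI impI)
    fix k \<pi> m and r :: "('a,'o) rtuple" assume kd: "kdepth_p (Next p) \<le> k" and pp: "is_path M \<pi>" and st: "rt_stops r (pprefix \<pi> m)"
    have st': "rt_stops r (pprefix \<pi> (Suc m))" using rt_stops_len[OF st, of "pprefix \<pi> (Suc m)"] by simp
    have "updT_iter M k (KTof M k (pprefix \<pi> m) r) (suffix_path \<pi> m) (obs_of M (pprefix \<pi> m) r) (Suc 0)
           = KTof M k (pprefix \<pi> (m+Suc 0)) r
        \<and> obs_of M (pprefix \<pi> (m+Suc 0)) r = obs_of M (pprefix \<pi> m) r"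
      by (rule iter_KTof[OF wf pp st])
    hence E: "updT M k (KTof M k (pprefix \<pi> m) r) (\<pi> (Suc m)) (obs_of M (pprefix \<pi> m) r)
           = KTof M k (pprefix \<pi> (Suc m)) r"
        "obs_of M (pprefix \<pi> (Suc m)) r = obs_of M (pprefix \<pi> m) r" by (simp_all add: suffix_app)
    have "psat M p \<pi> (Suc m) r \<longleftrightarrow> ipsat M p k (suffix_path \<pi> (Suc m)) (KTof M k (pprefix \<pi> (Suc m)) r) (obs_of M (pprefix \<pi> (Suc m)) r)"
      using Next.IH kd pp st' by simp
    thus "psat M (Next p) \<pi> m r \<longleftrightarrow> ipsat M (Next p) k (suffix_path \<pi> m) (KTof M k (pprefix \<pi> m) r) (obs_of M (pprefix \<pi> m) r)"
      using E by (simp add: suffix_comp suffix_app)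
  qed
next
  case (Until p q)
  show ?case
  proof (intro allI impI)
    fix k \<pi> m and r :: "('a,'o) rtuple" assume kd: "kdepth_p (Until p q) \<le> k" and pp: "is_path M \<pi>" and st: "rt_stops r (pprefix \<pi> m)"
    let ?t = "KTof M k (pprefix \<pi> m) r" and ?ov = "obs_of M (pprefix \<pi> m) r"
    have E: "updT_iter M k ?t (suffix_path \<pi> m) ?ov j = KTof M k (pprefix \<pi> (m+j)) r"
       "obs_of M (pprefix \<pi> (m+j)) r = ?ov" for j
      using iter_KTof[OF wf pp st, of k j] by simp_all
    have stj: "rt_stops r (pprefix \<pi> (m+j))" for j using rt_stops_len[OF st, of "pprefix \<pi> (m+j)"] by simp
    have Q: "psat M q \<pi> (m+j) r \<longleftrightarrow> ipsat M q k (suffix_path (suffix_path \<pi> m) j) (updT_iter M k ?t (suffix_path \<pi> m) ?ov j) ?ov" for j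
    proof -
      have "psat M q \<pi> (m+j) r \<longleftrightarrow> ipsat M q k (suffix_path \<pi> (m+j)) (KTof M k (pprefix \<pi> (m+j)) r) (obs_of M (pprefix \<pi> (m+j)) r)"
        using Until.IH(2) kd pp stj[of j] by auto
      thus ?thesis using E[of j] by (simp add: suffix_comp)
    qed
    have P: "psat M p \<pi> (m+j) r \<longleftrightarrow> ipsat M p k (suffix_path (suffix_path \<pi> m) j) (updT_iter M k ?t (suffix_path \<pi> m) ?ov j) ?ov" for j
    proof -
      have "psat M p \<pi> (m+j) r \<longleftrightarrow> ipsat M p k (suffix_path \<pi> (m+j)) (KTof M k (pprefix \<pi> (m+j)) r) (obs_of M (pprefix \<pi> (m+j)) r)"
        using Until.IH(1) kd pp stj[of j] by auto
      thus ?thesis using E[of j] by (simp add: suffix_comp)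
    qed
    have "psat M (Until p q) \<pi> m r \<longleftrightarrow>
        (\<exists>n. psat M q \<pi> (m+n) r \<and> (\<forall>j<n. psat M p \<pi> (m+j) r))"
    proof
      assume "psat M (Until p q) \<pi> m r"
      then obtain m' where "m' \<ge> m" "psat M q \<pi> m' r" "\<forall>j. m \<le> j \<and> j < m' \<longrightarrow> psat M p \<pi> j r" by auto
      thus "\<exists>n. psat M q \<pi> (m+n) r \<and> (\<forall>j<n. psat M p \<pi> (m+j) r)"
        by (intro exI[of _ "m' - m"]) auto
    next
      assume "\<exists>n. psat M q \<pi> (m+n) r \<and> (\<forall>j<n. psat M p \<pi> (m+j) r)"
      then obtain n where "psat M q \<pi> (m+n) r" "\<forall>j<n. psat M p \<pi> (m+j) r" by auto
      moreover have "\<forall>j. m \<le> j \<and> j < m+n \<longrightarrow> psat M p \<pi> j r"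
        using calculation(2) by (metis add_less_cancel_left le_add_diff_inverse)
      ultimately show "psat M (Until p q) \<pi> m r" by (simp only: psat.simps) (rule exI[of _ "m+n"], auto)
    qed
    thus "psat M (Until p q) \<pi> m r \<longleftrightarrow> ipsat M (Until p q) k (suffix_path \<pi> m) ?t ?ov"
      using P Q by simp
  qed
qed

theorem mainTheorem6:
  fixes M :: "('s::finite, 'o::finite, 'a::finite) model"
    and \<phi> :: "('a, 'o) hform"
    and h :: "'s list"
    and r :: "('a, 'o) rtuple"
    and k :: nat
  assumes "kdepth \<phi> = k"
    and "wf_model M"
    and "is_hist M h"
    and "rt_stops r h"
  shows "hsat M \<phi> h r \<longleftrightarrow> isat M \<phi> k (KTof M k h r) (obs_of M h r)"
  using main_lemma(1)[OF assms(2), of \<phi>] assms by auto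

end
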